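(* Let $G=(S,\Sigma,u,\{A_\sigma\}_{\sigma\in\Sigma},v)$ be a $k$-state GFA over a finite alphabet $\Sigma$ and let $\lambda\in\mathbb R$. Then there exists a one-way PFA $P$ over the same alphabet $\Sigma$ with at most $2k+6$ states such that for every word $w\in\Sigma^\ast$, \[ f_P(w)>\tfrac12 \iff f_G(w)>\lambda. \]
   Context: Let $\Sigma$ be a finite alphabet and $\Sigma^\ast$ the set of finite words over it. A generalized finite automaton (GFA) over $\Sigma$ with $k$ states is a tuple $G=(S,\Sigma,u,\{A_\sigma\}_{\sigma\in\Sigma},v)$ with $|S|=k$, $u\in\mathbb R^{1\times k}$ a row vector, each $A_\sigma\in\mathbb R^{k\times k}$ an arbitrary real matrix, and $v\in\mathbb R^{k\times 1}$ a column vector; for $w=\sigma_1\cdots\sigma_m$ its value is $f_G(w)=uA_{\sigma_1}\cdots A_{\sigma_m}v$ (so $f_G(\varepsilon)=uv$). A one-way PFA (probabilistic finite automaton, end-marker model) over $\Sigma$ is a tuple $P=(S',\Sigma,\pi,\{P_\sigma\}_{\sigma\in\Sigma},P_{\#},F)$, where $S'$ is a finite state set (its number of states is $|S'|$), $\pi$ is an initial probability distribution (row vector) on $S'$, each $P_\sigma$ and $P_\#$ are row-stochastic $|S'|\times|S'|$ matrices, and $F\subseteq S'$. For $w=\sigma_1\cdots\sigma_m$, $f_P(w)=\pi P_{\sigma_1}\cdots P_{\sigma_m}P_\#\mathbf 1_F$, where $\mathbf 1_F$ is the indicator column vector of $F$. *)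

theory Defs
  imports "Jordan_Normal_Form.Matrix"
begin

definition word_prod :: "nat \<Rightarrow> ('a \<Rightarrow> real mat) \<Rightarrow> 'a list \<Rightarrow> real mat" where
  "word_prod n M w = foldr (\<lambda>\<sigma> X. M \<sigma> * X) w (1\<^sub>m n)"

definition is_gfa :: "nat \<Rightarrow> real vec \<Rightarrow> ('a \<Rightarrow> real mat) \<Rightarrow> real vec \<Rightarrow> bool" where
  "is_gfa k u A v \<longleftrightarrow> u \<in> carrier_vec k \<and> v \<in> carrier_vec k \<and> (\<forall>\<sigma>. A \<sigma> \<in> carrier_mat k k)"

definition gfa_fun :: "nat \<Rightarrow> real vec \<Rightarrow> ('a \<Rightarrow> real mat) \<Rightarrow> real vec \<Rightarrow> 'a list \<Rightarrow> real" where
  "gfa_fun k u A v w = u \<bullet> (word_prod k A w *\<^sub>v v)"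

definition prob_vec :: "nat \<Rightarrow> real vec \<Rightarrow> bool" where
  "prob_vec n p \<longleftrightarrow> p \<in> carrier_vec n \<and> (\<forall>i<n. p $ i \<ge> 0) \<and> (\<Sum>i<n. p $ i) = 1"

definition row_stochastic :: "nat \<Rightarrow> real mat \<Rightarrow> bool" where
  "row_stochastic n M \<longleftrightarrow> M \<in> carrier_mat n n \<and>
     (\<forall>i<n. \<forall>j<n. M $$ (i, j) \<ge> 0) \<and> (\<forall>i<n. (\<Sum>j<n. M $$ (i, j)) = 1)"

text \<open>A one-way PFA (end-marker model) with state set {0..<n}.\<close>
definition is_pfa :: "nat \<Rightarrow> real vec \<Rightarrow> ('a \<Rightarrow> real mat) \<Rightarrow> real mat \<Rightarrow> nat set \<Rightarrow> bool" where
  "is_pfa n \<pi> P Pend F \<longleftrightarrow> prob_vec n \<pi> \<and> (\<forall>\<sigma>. row_stochastic n (P \<sigma>)) \<and>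
     row_stochastic n Pend \<and> F \<subseteq> {0..<n}"

definition indicator_vec :: "nat \<Rightarrow> nat set \<Rightarrow> real vec" where
  "indicator_vec n F = vec n (\<lambda>i. if i \<in> F then 1 else 0)"

definition pfa_fun :: "nat \<Rightarrow> real vec \<Rightarrow> ('a \<Rightarrow> real mat) \<Rightarrow> real mat \<Rightarrow> nat set \<Rightarrow> 'a list \<Rightarrow> real" where
  "pfa_fun n \<pi> P Pend F w = \<pi> \<bullet> ((word_prod n P w * Pend) *\<^sub>v indicator_vec n F)"

end

theory Submission
  imports Defs
begin


lemma word_prod_Cons: "word_prod n M (s#w) = M s * word_prod n M w"
  by (simp add: word_prod_def)

lemma word_prod_Nil: "word_prod n M [] = 1\<^sub>m n"
  by (simp add: word_prod_def)

lemma word_prod_carrier: "(\<And>s. M s \<in> carrier_mat n n) \<Longrightarrow> word_prod n M w \<in> carrier_mat n n"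
  by (induction w) (auto simp: word_prod_Cons word_prod_Nil intro!: mult_carrier_mat)

lemma mat_vec_entry: "M \<in> carrier_mat n m \<Longrightarrow> y \<in> carrier_vec m \<Longrightarrow> i < n \<Longrightarrow>
   (M *\<^sub>v y) $ i = (\<Sum>j<m. M $$ (i,j) * y $ j)"
  by (simp add: scalar_prod_def atLeast0LessThan)

lemma sum_split3: "(\<Sum>j<2*(K::nat)+3. f j) = (\<Sum>j<K. f j) + (\<Sum>j<K. f (K+j)) + f (2*K) + f (2*K+1) + f (2*K+2)"
proof -
  have a: "(\<Sum>j<K+m. f j) = (\<Sum>j<K. f j) + (\<Sum>j<m. f (K+j))" for m :: nat
    by (induction m) (auto simp: add.assoc)
  have e: "2*K+3 = Suc (Suc (Suc (K+K)))" by simp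
  have "(\<Sum>j<2*K+3. f j) = (\<Sum>j<K+K. f j) + f (K+K) + f (Suc (K+K)) + f (Suc (Suc (K+K)))"
    unfolding e sum.lessThan_Suc by simp
  also have "\<dots> = (\<Sum>j<K. f j) + (\<Sum>j<K. f (K+j)) + f (2*K) + f (2*K+1) + f (2*K+2)"
    unfolding a by (simp add: mult_2)
  finally show ?thesis .
qed

lemma pm_lemma: "(c::real) > 0 \<Longrightarrow> max a 0 / c * (1/2 + t) + max (-a) 0 / c * (1/2 - t) = \<bar>a\<bar>/(2*c) + a*t/c"
  by (cases "a \<ge> 0") (auto simp: field_simps)



context
  fixes k :: nat and u v :: "real vec" and A :: "'a::finite \<Rightarrow> real mat" and lam :: real
begin

definition bb :: "'a \<Rightarrow> nat \<Rightarrow> nat \<Rightarrow> real" where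
  "bb s i j = (if i<k \<and> j<k then A s $$ (i,j) else if i=k \<and> j=k then 1 else 0)"
definition vv :: "nat \<Rightarrow> real" where "vv i = (if i<k then v$i else -lam)"
definition uu :: "nat \<Rightarrow> real" where "uu i = (if i<k then u$i else 1)"

fun gx :: "'a list \<Rightarrow> nat \<Rightarrow> real" where
  "gx [] i = vv i"
| "gx (s#w) i = (\<Sum>j<Suc k. bb s i j * gx w j)"

lemma gx_correct:
  assumes "is_gfa k u A v"
  shows "(\<forall>i<k. gx w i = (word_prod k A w *\<^sub>v v) $ i) \<and> gx w k = -lam"
proof (induction w)
  case Nil
  have vc: "v \<in> carrier_vec k" using assms by (simp add: is_gfa_def)
  then show ?case by (auto simp: vv_def word_prod_Nil)
next
  case (Cons s w)
  have vc: "v \<in> carrier_vec k" and Ac: "A s \<in> carrier_mat k k" using assms by (auto simp: is_gfa_def)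
  have Wc: "word_prod k A w \<in> carrier_mat k k" using assms by (intro word_prod_carrier) (auto simp: is_gfa_def)
  have "gx (s#w) i = (word_prod k A (s#w) *\<^sub>v v) $ i" if i: "i<k" for i
  proof -
    have "gx (s#w) i = (\<Sum>j<k. bb s i j * gx w j) + bb s i k * gx w k" by simp
    also have "\<dots> = (\<Sum>j<k. A s $$ (i,j) * (word_prod k A w *\<^sub>v v) $ j)"
      using Cons i by (auto simp: bb_def intro!: sum.cong)
    also have "\<dots> = (A s *\<^sub>v (word_prod k A w *\<^sub>v v)) $ i"
      using Ac Wc vc i by (subst mat_vec_entry[where n=k and m=k]) auto
    also have "\<dots> = (word_prod k A (s#w) *\<^sub>v v) $ i"
      using Ac Wc vc by (simp add: word_prod_Cons)
    finally show ?thesis .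
  qed
  moreover have "gx (s#w) k = -lam"
  proof -
    have "gx (s#w) k = (\<Sum>j<k. bb s k j * gx w j) + bb s k k * gx w k" by simp
    also have "\<dots> = -lam" using Cons by (simp add: bb_def)
    finally show ?thesis .
  qed
  ultimately show ?case by blast
qed


declare sum.lessThan_Suc[simp del]

definition cc :: real where
  "cc = 1 + (\<Sum>s\<in>UNIV. \<Sum>i<Suc k. \<Sum>j<Suc k. \<bar>bb s i j\<bar>)"
definition ee :: real where "ee = 1/(2*(1 + (\<Sum>i<Suc k. \<bar>vv i\<bar>)))"
definition al :: real where "al = 1/(1 + (\<Sum>i<Suc k. \<bar>uu i\<bar>))"

definition dd :: "'a \<Rightarrow> nat \<Rightarrow> real" where
  "dd s i = 1 - (\<Sum>l<Suc k. \<bar>bb s i l\<bar>)/cc"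

definition Yf :: "'a list \<Rightarrow> nat \<Rightarrow> real" where
  "Yf w i = (if i < Suc k then 1/2 + ee*(1/cc)^length w * gx w i
     else if i < 2*Suc k then 1/2 - ee*(1/cc)^length w * gx w (i-Suc k) else 1/2)"

definition pf :: "'a \<Rightarrow> nat \<Rightarrow> nat \<Rightarrow> real" where
  "pf s i j = (
     if i < Suc k then (if j < Suc k then max (bb s i j) 0 / cc else if j < 2*Suc k then max (- bb s i (j-Suc k)) 0 / cc
                     else if j = 2*Suc k then dd s i else 0)
     else if i < 2*Suc k then (if j < Suc k then max (- bb s (i-Suc k) j) 0 / cc else if j < 2*Suc k then max (bb s (i-Suc k) (j-Suc k)) 0 / cc
                     else if j = 2*Suc k then dd s (i-Suc k) else 0)
     else (if j = 2*Suc k then 1 else 0))"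

definition Pm :: "'a \<Rightarrow> real mat" where
  "Pm s = mat (2*Suc k+3) (2*Suc k+3) (\<lambda>(i,j). pf s i j)"

definition pe :: "nat \<Rightarrow> nat \<Rightarrow> real" where
  "pe i j = (if j = 2*Suc k+1 then Yf [] i else if j = 2*Suc k+2 then 1 - Yf [] i else 0)"

definition Pe :: "real mat" where
  "Pe = mat (2*Suc k+3) (2*Suc k+3) (\<lambda>(i,j). pe i j)"

definition pii :: "real vec" where
  "pii = vec (2*Suc k+3) (\<lambda>i. if i < Suc k then al * max (uu i) 0 else if i < 2*Suc k then al * max (- uu (i-Suc k)) 0
      else if i = 2*Suc k then 1 - al * (\<Sum>l<Suc k. \<bar>uu l\<bar>) else 0)"

lemma cc_pos: "cc \<ge> 1"
  unfolding cc_def by (intro add_increasing2 sum_nonneg) auto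

lemma row_le: "(\<Sum>l<Suc k. \<bar>bb s i l\<bar>) \<le> cc - 1" if "i < Suc k"
proof -
  have "(\<Sum>l<Suc k. \<bar>bb s i l\<bar>) \<le> (\<Sum>i<Suc k. \<Sum>j<Suc k. \<bar>bb s i j\<bar>)"
    using that by (intro member_le_sum) (auto intro!: sum_nonneg)
  also have "\<dots> \<le> (\<Sum>s\<in>UNIV. \<Sum>i<Suc k. \<Sum>j<Suc k. \<bar>bb s i j\<bar>)"
    by (intro member_le_sum) (auto intro!: sum_nonneg)
  finally show ?thesis unfolding cc_def by simp
qed

lemma dd_nonneg: "i < Suc k \<Longrightarrow> dd s i \<ge> 0"
  using row_le[of i s] cc_pos unfolding dd_def by (simp add: field_simps)

lemma ee_pos: "ee > 0" unfolding ee_def by (simp add: sum_nonneg add_pos_nonneg)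
lemma al_pos: "al > 0" unfolding al_def by (simp add: sum_nonneg add_pos_nonneg)

lemma ee_vv: "i < Suc k \<Longrightarrow> ee * \<bar>vv i\<bar> \<le> 1/2"
proof -
  assume i: "i < Suc k"
  have "\<bar>vv i\<bar> \<le> (\<Sum>i<Suc k. \<bar>vv i\<bar>)" using i by (intro member_le_sum) auto
  then show ?thesis unfolding ee_def by (simp add: field_simps sum_nonneg)
qed

lemma al_uu: "al * (\<Sum>l<Suc k. \<bar>uu l\<bar>) \<le> 1"
proof -
  have "0 \<le> (\<Sum>l<Suc k. \<bar>uu l\<bar>)" by (simp add: sum_nonneg)
  then have "0 < 1 + (\<Sum>l<Suc k. \<bar>uu l\<bar>)" by linarith
  then show ?thesis unfolding al_def by (simp add: divide_le_eq)
qed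

lemma Y0_bounds: "i < (2*Suc k+3) \<Longrightarrow> 0 \<le> Yf [] i \<and> Yf [] i \<le> 1"
proof -
  have h: "\<bar>ee * vv j\<bar> \<le> 1/2" if "j < Suc k" for j
    using ee_vv[OF that] ee_pos by (simp add: abs_mult)
  assume i: "i < (2*Suc k+3)"
  show ?thesis
  proof (cases "i < Suc k")
    case True then show ?thesis using h[of i] unfolding Yf_def by (auto simp: abs_le_iff)
  next
    case False
    show ?thesis
    proof (cases "i < 2*Suc k")
      case True
      then have "i - Suc k < Suc k" by simp
      then show ?thesis using h[of "i - Suc k"] False True unfolding Yf_def by (auto simp: abs_le_iff)
    next
      case F2: False
      then show ?thesis using False unfolding Yf_def by auto
    qed
  qed
qed


lemma Pm_carrier: "Pm s \<in> carrier_mat (2*Suc k+3) (2*Suc k+3)" by (simp add: Pm_def)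
lemma Pe_carrier: "Pe \<in> carrier_mat (2*Suc k+3) (2*Suc k+3)" by (simp add: Pe_def)

lemma max_pm: "max a 0 + max (-a) 0 = \<bar>a::real\<bar>" by auto

lemma pf_nonneg: "i < 2*Suc k+3 \<Longrightarrow> pf s i j \<ge> 0"
  using dd_nonneg[of i s] dd_nonneg[of "i - Suc k" s] cc_pos unfolding pf_def
  by (auto simp: less_diff_conv)

lemma abs_sum_div: "(\<Sum>j<Suc k. max (f j) 0 / cc) + (\<Sum>j<Suc k. max (- f j) 0 / cc) = (\<Sum>j<Suc k. \<bar>f j\<bar>) / cc"
  by (simp add: sum_divide_distrib[symmetric] sum.distrib[symmetric] add_divide_distrib[symmetric] max_pm)

lemma pf_rowsum: "i < 2*Suc k+3 \<Longrightarrow> (\<Sum>j<2*Suc k+3. pf s i j) = 1"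
proof -
  assume i: "i < 2*Suc k+3"
  have "(\<Sum>j<2*Suc k+3. pf s i j) = (\<Sum>j<Suc k. pf s i j) + (\<Sum>j<Suc k. pf s i (Suc k + j))
     + pf s i (2*Suc k) + pf s i (2*Suc k+1) + pf s i (2*Suc k+2)" by (rule sum_split3)
  also have "\<dots> = 1"
  proof (cases "i < Suc k")
    case True
    have "(\<Sum>j<Suc k. pf s i j) + (\<Sum>j<Suc k. pf s i (Suc k + j)) = (\<Sum>j<Suc k. max (bb s i j) 0 / cc) + (\<Sum>j<Suc k. max (- bb s i j) 0 / cc)"
      using True by (simp add: pf_def)
    also have "\<dots> = (\<Sum>j<Suc k. \<bar>bb s i j\<bar>) / cc" by (rule abs_sum_div)
    finally show ?thesis using True cc_pos by (simp add: pf_def dd_def)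
  next
    case False
    show ?thesis
    proof (cases "i < 2*Suc k")
      case T2: True
      have "(\<Sum>j<Suc k. pf s i j) + (\<Sum>j<Suc k. pf s i (Suc k + j)) = (\<Sum>j<Suc k. max (- bb s (i - Suc k) j) 0 / cc) + (\<Sum>j<Suc k. max (bb s (i - Suc k) j) 0 / cc)"
        using False T2 by (simp add: pf_def)
      also have "\<dots> = (\<Sum>j<Suc k. \<bar>bb s (i - Suc k) j\<bar>) / cc" using abs_sum_div[of "bb s (i - Suc k)"] by simp
      finally show ?thesis using False T2 cc_pos by (simp add: pf_def dd_def)
    next
      case F2: False
      then show ?thesis using False by (simp add: pf_def)
    qed
  qed
  finally show ?thesis .
qed

lemma Pm_stoch: "row_stochastic (2*Suc k+3) (Pm s)"
  unfolding row_stochastic_def using Pm_carrier pf_nonneg pf_rowsum by (simp add: Pm_def)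

lemma Pe_stoch: "row_stochastic (2*Suc k+3) Pe"
proof -
  have "(\<Sum>j<2*Suc k+3. pe i j) = 1" if "i < 2*Suc k+3" for i
    by (subst sum_split3) (simp add: pe_def)
  moreover have "pe i j \<ge> 0" if "i < 2*Suc k+3" for i j
    using Y0_bounds[OF that] by (simp add: pe_def)
  ultimately show ?thesis unfolding row_stochastic_def using Pe_carrier by (simp add: Pe_def)
qed


lemma arith_aux: "(c::real) \<noteq> 0 \<Longrightarrow> S/(2*c) + T + (1 - S/c)/2 = 1/2 + T"
  by (simp add: field_simps)

lemma arith_aux2: "(c::real) \<noteq> 0 \<Longrightarrow> S/c + (2 - S*2/c)/2 = 1"
  by (simp add: field_simps)

lemma Y_step: "i < 2*Suc k+3 \<Longrightarrow> (\<Sum>j<2*Suc k+3. pf s i j * Yf w j) = Yf (s#w) i"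
proof -
  assume i: "i < 2*Suc k+3"
  define E where "E = ee * (1/cc)^length w"
  have E': "ee * (1/cc)^length (s#w) = E / cc" unfolding E_def by simp
  have "(\<Sum>j<2*Suc k+3. pf s i j * Yf w j) = (\<Sum>j<Suc k. pf s i j * Yf w j) + (\<Sum>j<Suc k. pf s i (Suc k + j) * Yf w (Suc k + j))
     + pf s i (2*Suc k) * Yf w (2*Suc k) + pf s i (2*Suc k+1) * Yf w (2*Suc k+1) + pf s i (2*Suc k+2) * Yf w (2*Suc k+2)"
    by (rule sum_split3)
  also have "\<dots> = Yf (s#w) i"
  proof (cases "i < Suc k")
    case True
    have "(\<Sum>j<Suc k. pf s i j * Yf w j) + (\<Sum>j<Suc k. pf s i (Suc k + j) * Yf w (Suc k + j))
       = (\<Sum>j<Suc k. max (bb s i j) 0 / cc * (1/2 + E * gx w j) + max (- bb s i j) 0 / cc * (1/2 - E * gx w j))"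
      using True by (simp add: pf_def Yf_def E_def sum.distrib)
    also have "\<dots> = (\<Sum>j<Suc k. \<bar>bb s i j\<bar> / (2*cc) + bb s i j * (E * gx w j) / cc)"
      using cc_pos by (intro sum.cong refl pm_lemma) simp
    also have "\<dots> = (\<Sum>j<Suc k. \<bar>bb s i j\<bar>) / (2*cc) + E / cc * gx (s#w) i"
      by (simp add: sum.distrib sum_divide_distrib[symmetric] sum_distrib_left algebra_simps)
    finally have X: "(\<Sum>j<Suc k. pf s i j * Yf w j) + (\<Sum>j<Suc k. pf s i (Suc k + j) * Yf w (Suc k + j)) = (\<Sum>j<Suc k. \<bar>bb s i j\<bar>) / (2*cc) + E / cc * gx (s#w) i" .
    have p: "pf s i (2*Suc k) * Yf w (2*Suc k) = (1 - (\<Sum>j<Suc k. \<bar>bb s i j\<bar>)/cc)/2"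
       "pf s i (2*Suc k+1) = 0" "pf s i (2*Suc k+2) = 0" "Yf (s#w) i = 1/2 + E/cc * gx (s#w) i"
      using True E' by (auto simp: pf_def dd_def Yf_def)
    show ?thesis unfolding X p using cc_pos by (simp add: arith_aux arith_aux2)
  next
    case False
    show ?thesis
    proof (cases "i < 2*Suc k")
      case T2: True
      have "(\<Sum>j<Suc k. pf s i j * Yf w j) + (\<Sum>j<Suc k. pf s i (Suc k + j) * Yf w (Suc k + j))
         = (\<Sum>j<Suc k. max (- bb s (i - Suc k) j) 0 / cc * (1/2 + E * gx w j) + max (- (- bb s (i - Suc k) j)) 0 / cc * (1/2 - E * gx w j))"
        using False T2 by (simp add: pf_def Yf_def E_def sum.distrib)
      also have "\<dots> = (\<Sum>j<Suc k. \<bar>- bb s (i - Suc k) j\<bar> / (2*cc) + (- bb s (i - Suc k) j) * (E * gx w j) / cc)"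
        using cc_pos by (intro sum.cong refl pm_lemma) simp
      also have "\<dots> = (\<Sum>j<Suc k. \<bar>bb s (i - Suc k) j\<bar>) / (2*cc) + - (E / cc * gx (s#w) (i - Suc k))"
        by (simp add: sum.distrib sum_subtractf sum_divide_distrib[symmetric] sum_distrib_left algebra_simps)
      finally have X: "(\<Sum>j<Suc k. pf s i j * Yf w j) + (\<Sum>j<Suc k. pf s i (Suc k + j) * Yf w (Suc k + j)) = (\<Sum>j<Suc k. \<bar>bb s (i - Suc k) j\<bar>) / (2*cc) + - (E / cc * gx (s#w) (i - Suc k))" .
      have p: "pf s i (2*Suc k) * Yf w (2*Suc k) = (1 - (\<Sum>j<Suc k. \<bar>bb s (i - Suc k) j\<bar>)/cc)/2"
         "pf s i (2*Suc k+1) = 0" "pf s i (2*Suc k+2) = 0" "Yf (s#w) i = 1/2 + - (E/cc * gx (s#w) (i - Suc k))"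
        using False T2 E' by (auto simp: pf_def dd_def Yf_def)
      show ?thesis unfolding X p using cc_pos by (simp add: arith_aux arith_aux2)
    next
      case F2: False
      then show ?thesis using False by (simp add: pf_def Yf_def)
    qed
  qed
  finally show ?thesis .
qed

lemma Y_invariant:
  "(word_prod (2*Suc k+3) Pm w * Pe) *\<^sub>v indicator_vec (2*Suc k+3) {2*Suc k+1} = vec (2*Suc k+3) (Yf w)"
proof (induction w)
  case Nil
  show ?case
  proof (rule eq_vecI)
    fix i assume "i < dim_vec (vec (2*Suc k+3) (Yf []))"
    then have i: "i < 2*Suc k+3" by simp
    have "(Pe *\<^sub>v indicator_vec (2*Suc k+3) {2*Suc k+1}) $ i = (\<Sum>j<2*Suc k+3. pe i j * (if j = 2*Suc k+1 then 1 else 0))"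
      using i Pe_carrier by (subst mat_vec_entry[where n="2*Suc k+3" and m="2*Suc k+3"])
         (auto simp: Pe_def indicator_vec_def intro!: sum.cong)
    also have "\<dots> = Yf [] i" by (subst sum_split3) (simp add: pe_def)
    finally show "((word_prod (2*Suc k+3) Pm [] * Pe) *\<^sub>v indicator_vec (2*Suc k+3) {2*Suc k+1}) $ i = vec (2*Suc k+3) (Yf []) $ i"
      using i Pe_carrier by (simp add: word_prod_Nil)
  qed (simp add: word_prod_Nil Pe_def)
next
  case (Cons s w)
  have Wc: "word_prod (2*Suc k+3) Pm w \<in> carrier_mat (2*Suc k+3) (2*Suc k+3)"
    using Pm_carrier by (intro word_prod_carrier) auto
  have ic: "indicator_vec (2*Suc k+3) {2*Suc k+1} \<in> carrier_vec (2*Suc k+3)" by (simp add: indicator_vec_def)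
  have "(word_prod (2*Suc k+3) Pm (s#w) * Pe) *\<^sub>v indicator_vec (2*Suc k+3) {2*Suc k+1}
      = Pm s *\<^sub>v ((word_prod (2*Suc k+3) Pm w * Pe) *\<^sub>v indicator_vec (2*Suc k+3) {2*Suc k+1})"
  proof -
    have "word_prod (2*Suc k+3) Pm (s#w) * Pe = Pm s * (word_prod (2*Suc k+3) Pm w * Pe)"
      unfolding word_prod_Cons by (rule assoc_mult_mat[OF Pm_carrier Wc Pe_carrier])
    then show ?thesis
      by (simp only: assoc_mult_mat_vec[OF Pm_carrier mult_carrier_mat[OF Wc Pe_carrier] ic])
  qed
  also have "\<dots> = Pm s *\<^sub>v vec (2*Suc k+3) (Yf w)" using Cons by simp
  also have "\<dots> = vec (2*Suc k+3) (Yf (s#w))"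
  proof (rule eq_vecI)
    fix i assume "i < dim_vec (vec (2*Suc k+3) (Yf (s#w)))"
    then have i: "i < 2*Suc k+3" by simp
    have "(Pm s *\<^sub>v vec (2*Suc k+3) (Yf w)) $ i = (\<Sum>j<2*Suc k+3. pf s i j * Yf w j)"
      using i Pm_carrier[of s] by (subst mat_vec_entry[where n="2*Suc k+3" and m="2*Suc k+3"])
         (auto simp: Pm_def intro!: sum.cong)
    then show "(Pm s *\<^sub>v vec (2*Suc k+3) (Yf w)) $ i = vec (2*Suc k+3) (Yf (s#w)) $ i"
      using Y_step[OF i] i by simp
  qed (simp add: Pm_def)
  finally show ?case .
qed


lemma pm_lemma2: "max a 0 * (1/2 + t) + max (-a) 0 * (1/2 - t) = \<bar>a\<bar>/2 + a*(t::real)"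
  by (cases "a \<ge> 0") (auto simp: field_simps)

lemma arith_aux3: "al * S / 2 + T + (1 - al * S) / 2 = 1/2 + (T::real)"
  by (simp add: field_simps)

lemma pii_prob: "prob_vec (2*Suc k+3) pii"
proof -
  have "(\<Sum>i<2*Suc k+3. pii $ i) = (\<Sum>j<Suc k. pii $ j) + (\<Sum>j<Suc k. pii $ (Suc k + j))
     + pii $ (2*Suc k) + pii $ (2*Suc k+1) + pii $ (2*Suc k+2)" by (rule sum_split3)
  also have "(\<Sum>j<Suc k. pii $ j) + (\<Sum>j<Suc k. pii $ (Suc k + j)) = (\<Sum>j<Suc k. al * (max (uu j) 0 + max (- uu j) 0))"
    by (simp add: pii_def sum.distrib algebra_simps)
  also have "\<dots> = al * (\<Sum>j<Suc k. \<bar>uu j\<bar>)" by (simp add: max_pm sum_distrib_left)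
  finally have "(\<Sum>i<2*Suc k+3. pii $ i) = 1" by (simp add: pii_def)
  moreover have "\<forall>i<2*Suc k+3. pii $ i \<ge> 0" using al_pos al_uu by (simp add: pii_def)
  ultimately show ?thesis unfolding prob_vec_def by (simp add: pii_def)
qed

lemma final_value:
  assumes "is_gfa k u A v"
  shows "pfa_fun (2*Suc k+3) pii Pm Pe {2*Suc k+1} w = 1/2 + al * (ee * (1/cc)^length w) * (gfa_fun k u A v w - lam)"
proof -
  define E where "E = ee * (1/cc)^length w"
  have "pfa_fun (2*Suc k+3) pii Pm Pe {2*Suc k+1} w = pii \<bullet> vec (2*Suc k+3) (Yf w)"
    unfolding pfa_fun_def Y_invariant ..
  also have "\<dots> = (\<Sum>i<2*Suc k+3. pii $ i * Yf w i)"
    by (simp add: scalar_prod_def atLeast0LessThan)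
  also have "\<dots> = (\<Sum>j<Suc k. pii $ j * Yf w j) + (\<Sum>j<Suc k. pii $ (Suc k + j) * Yf w (Suc k + j))
     + pii $ (2*Suc k) * Yf w (2*Suc k) + pii $ (2*Suc k+1) * Yf w (2*Suc k+1) + pii $ (2*Suc k+2) * Yf w (2*Suc k+2)"
    by (rule sum_split3)
  also have "(\<Sum>j<Suc k. pii $ j * Yf w j) + (\<Sum>j<Suc k. pii $ (Suc k + j) * Yf w (Suc k + j))
      = (\<Sum>j<Suc k. al * (max (uu j) 0 * (1/2 + E * gx w j) + max (- uu j) 0 * (1/2 - E * gx w j)))"
    unfolding sum.distrib[symmetric] by (intro sum.cong refl) (simp add: pii_def Yf_def E_def algebra_simps)
  also have "\<dots> = (\<Sum>j<Suc k. al * (\<bar>uu j\<bar>/2 + uu j * (E * gx w j)))"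
    by (simp only: pm_lemma2)
  also have "\<dots> = al * (\<Sum>j<Suc k. \<bar>uu j\<bar>) / 2 + al * E * (\<Sum>j<Suc k. uu j * gx w j)"
    by (simp add: sum.distrib sum_distrib_left sum_divide_distrib[symmetric] algebra_simps)
  finally have X: "pfa_fun (2*Suc k+3) pii Pm Pe {2*Suc k+1} w = al * (\<Sum>j<Suc k. \<bar>uu j\<bar>) / 2 + al * E * (\<Sum>j<Suc k. uu j * gx w j) + (1 - al * (\<Sum>j<Suc k. \<bar>uu j\<bar>)) / 2"
    by (simp add: pii_def Yf_def)
  have uc: "u \<in> carrier_vec k" and vc: "v \<in> carrier_vec k" using assms by (auto simp: is_gfa_def)
  have Wc: "word_prod k A w \<in> carrier_mat k k" using assms by (intro word_prod_carrier) (auto simp: is_gfa_def)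
  have G: "gx w i = (word_prod k A w *\<^sub>v v) $ i" if "i < k" for i using gx_correct[OF assms] that by blast
  have "(\<Sum>j<Suc k. uu j * gx w j) = (\<Sum>j<k. u $ j * (word_prod k A w *\<^sub>v v) $ j) + uu k * gx w k"
    by (simp add: sum.lessThan_Suc uu_def G)
  also have "\<dots> = gfa_fun k u A v w - lam"
    using gx_correct[OF assms] Wc vc by (simp add: uu_def gfa_fun_def scalar_prod_def atLeast0LessThan)
  finally have "(\<Sum>j<Suc k. uu j * gx w j) = gfa_fun k u A v w - lam" .
  then show ?thesis unfolding X E_def[symmetric] by (simp only: arith_aux3)
qed

end

lemma sign_aux: "(c::real) > 0 \<Longrightarrow> (1/2 < 1/2 + c*(g - l)) \<longleftrightarrow> l < g"
  by (simp add: zero_less_mult_iff)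

theorem theorem3p2:
  fixes k :: nat and u v :: "real vec" and A :: "'a::finite \<Rightarrow> real mat" and lam :: real
  assumes "is_gfa k u A v"
  shows "\<exists>n \<pi> (P :: 'a \<Rightarrow> real mat) Pend F. n \<le> 2 * k + 6 \<and> is_pfa n \<pi> P Pend F \<and>
           (\<forall>w :: 'a list. pfa_fun n \<pi> P Pend F w > 1/2 \<longleftrightarrow> gfa_fun k u A v w > lam)"
proof (intro exI conjI allI)
  show "2*Suc k+3 \<le> 2 * k + 6" by simp
  show "is_pfa (2*Suc k+3) (pii k u) (Pm k A) (Pe k v A lam) {2*Suc k+1}"
    unfolding is_pfa_def using pii_prob Pm_stoch Pe_stoch by auto
  fix w :: "'a list"
  have pos: "al k u * (ee k v lam * (1/cc k A)^length w) > 0"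
  proof -
    have "0 < cc k A" using cc_pos[of k A] by linarith
    then show ?thesis using al_pos[of k u] ee_pos[of k v lam] by (simp add: mult_pos_pos)
  qed
  show "pfa_fun (2*Suc k+3) (pii k u) (Pm k A) (Pe k v A lam) {2*Suc k+1} w > 1/2 \<longleftrightarrow> gfa_fun k u A v w > lam"
    unfolding final_value[OF assms] using pos by (rule sign_aux)
qed

end
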